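(* For every Boolean matrix $I\in\{0,1\}^{n\times m}$, $\mathrm{rank}_\mathrm{B}(I)\leq\mathrm{rank}_\mathrm{B}(\mathcal{E}(I))$.
   Context: $\mathrm{rank}_\mathrm{B}(K)$ (Boolean rank) of $K\in\{0,1\}^{n\times m}$ is the least $k$ for which there exist $A\in\{0,1\}^{n\times k}$, $B\in\{0,1\}^{k\times m}$ with $K=A\circ B$, where $(A\circ B)_{ij}=\max_{l=1}^k\min(A_{il},B_{lj})$. With $X=\{1,\dots,n\}$, $Y=\{1,\dots,m\}$ and for $C\subseteq X$, $D\subseteq Y$: $C^{\uparrow}=\{j\mid \forall i\in C: I_{ij}=1\}$, $D^{\downarrow}=\{i\mid \forall j\in D: I_{ij}=1\}$; $\mathcal{B}(I)=\{\langle C,D\rangle\mid C^\uparrow=D, D^\downarrow=C\}$ ordered by inclusion of first components; $\gamma(i)=\langle\{i\}^{\uparrow\downarrow},\{i\}^\uparrow\rangle$, $\mu(j)=\langle\{j\}^\downarrow,\{j\}^{\downarrow\uparrow}\rangle$, $\mathcal{I}_{ij}=\{c\in\mathcal{B}(I)\mid\gamma(i)\leq c\leq\mu(j)\}$. $\mathcal{E}(I)\in\{0,1\}^{n\times m}$ is defined by $\mathcal{E}(I)_{ij}=1$ iff $\mathcal{I}_{ij}$ is non-empty and minimal w.r.t. $\subseteq$ among the non-empty sets $\mathcal{I}_{i'j'}$. *)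

theory Defs
  imports Main
begin

text \<open>A Boolean n x m matrix is represented by a predicate K :: nat => nat => bool,
  with rows indexed by {0..<n} and columns by {0..<m}; entries outside are irrelevant.\<close>

definition bool_prod_eq :: "nat \<Rightarrow> nat \<Rightarrow> nat \<Rightarrow> (nat \<Rightarrow> nat \<Rightarrow> bool) \<Rightarrow> (nat \<Rightarrow> nat \<Rightarrow> bool)
    \<Rightarrow> (nat \<Rightarrow> nat \<Rightarrow> bool) \<Rightarrow> bool" where
  "bool_prod_eq n m k K A B \<longleftrightarrow> (\<forall>i<n. \<forall>j<m. K i j = (\<exists>l<k. A i l \<and> B l j))"

definition bool_rank :: "nat \<Rightarrow> nat \<Rightarrow> (nat \<Rightarrow> nat \<Rightarrow> bool) \<Rightarrow> nat" where
  "bool_rank n m K = (LEAST k. \<exists>A B. bool_prod_eq n m k K A B)"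

definition up :: "nat \<Rightarrow> nat \<Rightarrow> (nat \<Rightarrow> nat \<Rightarrow> bool) \<Rightarrow> nat set \<Rightarrow> nat set" where
  "up n m I C = {j. j < m \<and> (\<forall>i\<in>C. I i j)}"

definition down :: "nat \<Rightarrow> nat \<Rightarrow> (nat \<Rightarrow> nat \<Rightarrow> bool) \<Rightarrow> nat set \<Rightarrow> nat set" where
  "down n m I D = {i. i < n \<and> (\<forall>j\<in>D. I i j)}"

definition concepts :: "nat \<Rightarrow> nat \<Rightarrow> (nat \<Rightarrow> nat \<Rightarrow> bool) \<Rightarrow> (nat set \<times> nat set) set" where
  "concepts n m I = {(C, D). C \<subseteq> {..<n} \<and> D \<subseteq> {..<m} \<and> up n m I C = D \<and> down n m I D = C}"

definition concept_le :: "nat set \<times> nat set \<Rightarrow> nat set \<times> nat set \<Rightarrow> bool" where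
  "concept_le c d \<longleftrightarrow> fst c \<subseteq> fst d"

definition gamma :: "nat \<Rightarrow> nat \<Rightarrow> (nat \<Rightarrow> nat \<Rightarrow> bool) \<Rightarrow> nat \<Rightarrow> nat set \<times> nat set" where
  "gamma n m I i = (down n m I (up n m I {i}), up n m I {i})"

definition mu :: "nat \<Rightarrow> nat \<Rightarrow> (nat \<Rightarrow> nat \<Rightarrow> bool) \<Rightarrow> nat \<Rightarrow> nat set \<times> nat set" where
  "mu n m I j = (down n m I {j}, up n m I (down n m I {j}))"

definition interval :: "nat \<Rightarrow> nat \<Rightarrow> (nat \<Rightarrow> nat \<Rightarrow> bool) \<Rightarrow> nat \<Rightarrow> nat \<Rightarrow> (nat set \<times> nat set) set" where
  "interval n m I i j = {c \<in> concepts n m I. concept_le (gamma n m I i) c \<and> concept_le c (mu n m I j)}"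

definition essential :: "nat \<Rightarrow> nat \<Rightarrow> (nat \<Rightarrow> nat \<Rightarrow> bool) \<Rightarrow> nat \<Rightarrow> nat \<Rightarrow> bool" where
  "essential n m I i j \<longleftrightarrow> interval n m I i j \<noteq> {} \<and>
     (\<forall>i'<n. \<forall>j'<m. interval n m I i' j' \<noteq> {} \<and> interval n m I i' j' \<subseteq> interval n m I i j
        \<longrightarrow> interval n m I i' j' = interval n m I i j)"

end

theory Submission
  imports Defs
begin

lemma down_anti: "D \<subseteq> D' \<Longrightarrow> down n m I D' \<subseteq> down n m I D"
  by (auto simp: down_def)

lemma up_down_up: assumes "C \<subseteq> {..<n}" shows "up n m I (down n m I (up n m I C)) = up n m I C"
  using assms by (auto simp: up_def down_def)

lemma down_up_down: assumes "D \<subseteq> {..<m}" shows "down n m I (up n m I (down n m I D)) = down n m I D"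
  using assms by (auto simp: up_def down_def)

lemma self_in_down_up: "i < n \<Longrightarrow> i \<in> down n m I (up n m I {i})"
  by (auto simp: up_def down_def)

lemma ess_imp:
  assumes "i < n" "essential n m I i j" shows "I i j"
proof -
  from assms(2) obtain c where c: "c \<in> interval n m I i j" unfolding essential_def by blast
  hence "down n m I (up n m I {i}) \<subseteq> fst c" "fst c \<subseteq> down n m I {j}"
    by (auto simp: interval_def concept_le_def gamma_def mu_def)
  with self_in_down_up[OF assms(1), of m I] show ?thesis by (auto simp: down_def)
qed

lemma finite_interval: "finite (interval n m I a b)"
proof -
  have "interval n m I a b \<subseteq> Pow {..<n} \<times> Pow {..<m}"
    by (auto simp: interval_def concepts_def)
  thus ?thesis by (rule finite_subset) auto
qed



lemma cover:
  assumes fac: "bool_prod_eq n m k (essential n m I) A B"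
    and ij: "i < n" "j < m" "I i j"
  shows "\<exists>l<k. i \<in> down n m I {j. j < m \<and> B l j}
     \<and> j \<in> up n m I (down n m I {j. j < m \<and> B l j})"
proof -
  have gc: "gamma n m I i \<in> interval n m I i j"
    using ij up_down_up[of "{i}" n m I]
    by (auto simp: interval_def concepts_def gamma_def mu_def concept_le_def up_def down_def)
  define P where "P = (\<lambda>(a,b). a < n \<and> b < m \<and> interval n m I a b \<noteq> {}
                     \<and> interval n m I a b \<subseteq> interval n m I i j)"
  have "P (i,j)" using ij gc by (auto simp: P_def)
  then obtain x where x: "P x" and xmin: "\<forall>y. P y \<longrightarrow> card (interval n m I (fst x) (snd x))
      \<le> card (interval n m I (fst y) (snd y))"
    using ex_has_least_nat[of P "(i,j)" "\<lambda>p. card (interval n m I (fst p) (snd p))"] by auto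
  obtain i' j' where x': "x = (i',j')" by (cases x)
  have i'n: "i' < n" and j'm: "j' < m" and ne: "interval n m I i' j' \<noteq> {}"
    and sub: "interval n m I i' j' \<subseteq> interval n m I i j" using x x' by (auto simp: P_def)
  have ess: "essential n m I i' j'"
    unfolding essential_def
  proof (intro conjI allI impI ne)
    fix a b assume a: "a < n" "b < m" and h: "interval n m I a b \<noteq> {} \<and> interval n m I a b \<subseteq> interval n m I i' j'"
    hence "P (a,b)" using sub by (auto simp: P_def)
    hence "card (interval n m I i' j') \<le> card (interval n m I a b)" using xmin x' by force
    thus "interval n m I a b = interval n m I i' j'"
      using h card_subset_eq[OF finite_interval] by (metis antisym card_mono finite_interval)
  qed
  from fac i'n j'm ess obtain l where l: "l < k" "A i' l" "B l j'"
    unfolding bool_prod_eq_def by blast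
  define D where "D = {j. j < m \<and> B l j}"
  have Dm: "D \<subseteq> {..<m}" by (auto simp: D_def)
  have "D \<subseteq> up n m I {i'}"
  proof
    fix y assume "y \<in> D"
    hence "y < m" "B l y" by (auto simp: D_def)
    hence "essential n m I i' y" using fac i'n l unfolding bool_prod_eq_def by blast
    hence "I i' y" using ess_imp i'n by blast
    thus "y \<in> up n m I {i'}" using \<open>y < m\<close> by (auto simp: up_def)
  qed
  hence g: "down n m I (up n m I {i'}) \<subseteq> down n m I D" by (rule down_anti)
  have j'D: "j' \<in> D" using j'm l by (auto simp: D_def)
  hence mle: "down n m I D \<subseteq> down n m I {j'}" by (intro down_anti) auto
  have conc: "(down n m I D, up n m I (down n m I D)) \<in> concepts n m I"
    using down_up_down[OF Dm, of n I]
    by (auto simp: concepts_def up_def down_def)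
  have "(down n m I D, up n m I (down n m I D)) \<in> interval n m I i' j'"
    using conc g mle by (auto simp: interval_def concept_le_def gamma_def mu_def)
  hence "(down n m I D, up n m I (down n m I D)) \<in> interval n m I i j" using sub by blast
  hence h1: "down n m I (up n m I {i}) \<subseteq> down n m I D" and h2: "down n m I D \<subseteq> down n m I {j}"
    by (auto simp: interval_def concept_le_def gamma_def mu_def)
  have "i \<in> down n m I D" using h1 self_in_down_up[OF ij(1), of m I] by blast
  moreover have "j \<in> up n m I (down n m I D)" using h2 ij(2) by (auto simp: up_def down_def)
  ultimately show ?thesis using l D_def by blast
qed

theorem theorem4:
  fixes I :: "nat \<Rightarrow> nat \<Rightarrow> bool" and n m :: nat
  shows "bool_rank n m I \<le> bool_rank n m (essential n m I)"
proof -
  let ?E = "essential n m I"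
  have "\<exists>A B. bool_prod_eq n m n ?E A B"
    by (rule exI[of _ "\<lambda>i l. i = l"], rule exI[of _ ?E]) (auto simp: bool_prod_eq_def)
  hence "\<exists>A B. bool_prod_eq n m (bool_rank n m ?E) ?E A B"
    unfolding bool_rank_def by (rule LeastI)
  then obtain A B where fac: "bool_prod_eq n m (bool_rank n m ?E) ?E A B" by blast
  let ?k = "bool_rank n m ?E"
  have "bool_prod_eq n m ?k I (\<lambda>i l. i \<in> down n m I {j. j < m \<and> B l j})
          (\<lambda>l j. j \<in> up n m I (down n m I {j. j < m \<and> B l j}))"
    unfolding bool_prod_eq_def
  proof (intro allI impI)
    fix i j assume ij: "i < n" "j < m"
    show "I i j = (\<exists>l<?k. i \<in> down n m I {j. j < m \<and> B l j} \<and>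
               j \<in> up n m I (down n m I {j. j < m \<and> B l j}))"
    proof
      assume "I i j" thus "\<exists>l<?k. i \<in> down n m I {j. j < m \<and> B l j} \<and>
               j \<in> up n m I (down n m I {j. j < m \<and> B l j})"
        using cover[OF fac ij] by blast
    next
      assume "\<exists>l<?k. i \<in> down n m I {j. j < m \<and> B l j} \<and>
               j \<in> up n m I (down n m I {j. j < m \<and> B l j})"
      thus "I i j" by (auto simp: up_def)
    qed
  qed
  thus ?thesis unfolding bool_rank_def[of n m I] by (auto intro: Least_le)
qed

end
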